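(* A class $\mathcal{C}$ of finite complete bipartite graphs is $\mathrm{MSO}_2$-orderable if, and only if, there is a constant $s\in\mathbb{N}$ such that for all $K_{n,m}\in\mathcal{C}$ with $n\le m$ we have $m\le 2^{s(n+1)}$.
   Context: For $G=\langle V,E\rangle$, $\lceil G\rceil=\langle V\cup E,\mathrm{inc}\rangle$ (universe $V\cup E$, incidence relation). An MSO-formula $\varphi(x,y;Z_0,\dots,Z_{k-1})$ defines an order on a class $\mathcal{K}$ of structures if for every non-empty $\mathfrak{A}\in\mathcal{K}$ there are $P_0,\dots,P_{k-1}\subseteq A$ with $\{(a,b):\mathfrak{A}\models\varphi(a,b;\bar P)\}$ a linear order on $A$. A graph class is $\mathrm{MSO}_2$-orderable if some MSO-formula defines an order on $\{\lceil G\rceil : G\in\mathcal{C}\}$. *)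

theory Defs
  imports Main
begin

datatype mso =
    Rel nat nat
  | Eq nat nat
  | Mem nat nat          (* x_i \<in> X_j *)
  | Neg mso
  | Conj mso mso
  | ExI nat mso
  | ExS nat mso

fun fv :: "mso \<Rightarrow> nat set" where
  "fv (Rel i j) = {i, j}"
| "fv (Eq i j) = {i, j}"
| "fv (Mem i j) = {i}"
| "fv (Neg f) = fv f"
| "fv (Conj f g) = fv f \<union> fv g"
| "fv (ExI i f) = fv f - {i}"
| "fv (ExS j f) = fv f"

fun fsv :: "mso \<Rightarrow> nat set" where
  "fsv (Rel i j) = {}"
| "fsv (Eq i j) = {}"
| "fsv (Mem i j) = {j}"
| "fsv (Neg f) = fsv f"
| "fsv (Conj f g) = fsv f \<union> fsv g"
| "fsv (ExI i f) = fsv f"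
| "fsv (ExS j f) = fsv f - {j}"

fun sat :: "'a set \<times> ('a \<times> 'a) set \<Rightarrow> (nat \<Rightarrow> 'a) \<Rightarrow> (nat \<Rightarrow> 'a set) \<Rightarrow> mso \<Rightarrow> bool" where
  "sat S \<alpha> \<beta> (Rel i j) = ((\<alpha> i, \<alpha> j) \<in> snd S)"
| "sat S \<alpha> \<beta> (Eq i j) = (\<alpha> i = \<alpha> j)"
| "sat S \<alpha> \<beta> (Mem i j) = (\<alpha> i \<in> \<beta> j)"
| "sat S \<alpha> \<beta> (Neg f) = (\<not> sat S \<alpha> \<beta> f)"
| "sat S \<alpha> \<beta> (Conj f g) = (sat S \<alpha> \<beta> f \<and> sat S \<alpha> \<beta> g)"
| "sat S \<alpha> \<beta> (ExI i f) = (\<exists>a\<in>fst S. sat S (\<alpha>(i := a)) \<beta> f)"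
| "sat S \<alpha> \<beta> (ExS j f) = (\<exists>P. P \<subseteq> fst S \<and> sat S \<alpha> (\<beta>(j := P)) f)"

text \<open>Assignment x_0 := a, x_1 := b (other individual variables do not occur free).\<close>
definition asg2 :: "'a \<Rightarrow> 'a \<Rightarrow> nat \<Rightarrow> 'a" where
  "asg2 a b = (\<lambda>i. if i = 0 then a else b)"

text \<open>phi(x,y;Z_0..Z_{k-1}) (x = x_0, y = x_1) defines an order on the class K of structures.\<close>
definition mso_defines_order :: "mso \<Rightarrow> nat \<Rightarrow> ('a set \<times> ('a \<times> 'a) set) set \<Rightarrow> bool" where
  "mso_defines_order \<phi> k K \<longleftrightarrow>
     fv \<phi> \<subseteq> {0, 1} \<and> fsv \<phi> \<subseteq> {..<k} \<and>
     (\<forall>S\<in>K. fst S \<noteq> {} \<longrightarrow>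
        (\<exists>P :: nat \<Rightarrow> 'a set. (\<forall>i<k. P i \<subseteq> fst S) \<and>
           linear_order_on (fst S)
             {(a, b). a \<in> fst S \<and> b \<in> fst S \<and> sat S (asg2 a b) P \<phi>}))"

definition is_graph :: "'v set \<times> 'v set set \<Rightarrow> bool" where
  "is_graph G \<longleftrightarrow> (\<forall>e\<in>snd G. \<exists>u v. u \<noteq> v \<and> u \<in> fst G \<and> v \<in> fst G \<and> e = {u, v})"

definition incidence_structure :: "'v set \<times> 'v set set \<Rightarrow> ('v + 'v set) set \<times> (('v + 'v set) \<times> ('v + 'v set)) set" where
  "incidence_structure G =
     (Inl ` fst G \<union> Inr ` snd G,
      {(Inl v, Inr e) | v e. v \<in> fst G \<and> e \<in> snd G \<and> v \<in> e})"

definition MSO2_orderable :: "('v set \<times> 'v set set) set \<Rightarrow> bool" where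
  "MSO2_orderable C \<longleftrightarrow> (\<exists>\<phi> k. mso_defines_order \<phi> k (incidence_structure ` C))"

definition is_K :: "'v set \<times> 'v set set \<Rightarrow> nat \<Rightarrow> nat \<Rightarrow> bool" where
  "is_K G n m \<longleftrightarrow> finite (fst G) \<and>
     (\<exists>A B. A \<inter> B = {} \<and> A \<union> B = fst G \<and> card A = n \<and> card B = m \<and>
            snd G = {{a, b} | a b. a \<in> A \<and> b \<in> B})"

definition finite_complete_bipartite :: "'v set \<times> 'v set set \<Rightarrow> bool" where
  "finite_complete_bipartite G \<longleftrightarrow> (\<exists>n m. is_K G n m)"

end

theory Submission
  imports Defs "HOL-Library.List_Lexorder" "HOL-Library.Product_Lexorder"
begin

lemma sat_cong:
  "(\<forall>i\<in>fv \<phi>. \<alpha> i = \<alpha>' i) \<Longrightarrow> (\<forall>j\<in>fsv \<phi>. \<beta> j = \<beta>' j) \<Longrightarrow> sat S \<alpha> \<beta> \<phi> = sat S \<alpha>' \<beta>' \<phi>"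
proof (induction \<phi> arbitrary: \<alpha> \<alpha>' \<beta> \<beta>')
  case (ExI i f)
  show ?case using ExI.prems by (simp, intro bex_cong refl ExI.IH) auto
next
  case (ExS j f)
  show ?case using ExS.prems by (simp, intro ex_cong1 conj_cong refl ExS.IH) auto
next
  case (Conj f g)
  show ?case using Conj.prems Conj.IH[of \<alpha> \<alpha>' \<beta> \<beta>'] by simp
next
  case (Neg f)
  show ?case using Neg.prems Neg.IH[of \<alpha> \<alpha>' \<beta> \<beta>'] by simp
qed auto

lemma sat_perm:
  assumes b: "bij \<sigma>" and u: "\<sigma> ` fst S = fst S" and r: "\<forall>x y. (x,y) \<in> snd S \<longleftrightarrow> (\<sigma> x, \<sigma> y) \<in> snd S"
  shows "sat S \<alpha> \<beta> \<phi> \<longleftrightarrow> sat S (\<sigma> \<circ> \<alpha>) (\<lambda>j. \<sigma> ` \<beta> j) \<phi>"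
proof (induction \<phi> arbitrary: \<alpha> \<beta>)
  case (Rel i j) then show ?case using r by simp
next
  case (Eq i j) then show ?case using b by (simp add: bij_def inj_eq)
next
  case (Mem i j) then show ?case using b by (simp add: bij_def inj_image_mem_iff)
next
  case (ExI i f)
  have "(\<exists>a\<in>fst S. sat S (\<alpha>(i := a)) \<beta> f) \<longleftrightarrow> (\<exists>a\<in>fst S. sat S ((\<sigma> \<circ> \<alpha>)(i := \<sigma> a)) (\<lambda>j. \<sigma> ` \<beta> j) f)"
  proof (intro bex_cong refl)
    fix a show "sat S (\<alpha>(i := a)) \<beta> f = sat S ((\<sigma> \<circ> \<alpha>)(i := \<sigma> a)) (\<lambda>j. \<sigma> ` \<beta> j) f"
      using ExI.IH[of "\<alpha>(i := a)" \<beta>] by (simp only: fun_upd_comp)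
  qed
  also have "\<dots> \<longleftrightarrow> (\<exists>a\<in>fst S. sat S ((\<sigma> \<circ> \<alpha>)(i := a)) (\<lambda>j. \<sigma> ` \<beta> j) f)"
    using u by (metis imageE imageI)
  finally show ?case by (simp add: comp_def)
next
  case (ExS j f)
  have "(\<exists>P. P \<subseteq> fst S \<and> sat S \<alpha> (\<beta>(j := P)) f) \<longleftrightarrow>
        (\<exists>P. P \<subseteq> fst S \<and> sat S (\<sigma> \<circ> \<alpha>) ((\<lambda>j. \<sigma> ` \<beta> j)(j := \<sigma> ` P)) f)"
    using ExS.IH[of \<alpha>] by (simp add: fun_upd_def if_distrib comp_def cong: if_cong)
  also have "\<dots> \<longleftrightarrow> (\<exists>Q. Q \<subseteq> fst S \<and> sat S (\<sigma> \<circ> \<alpha>) ((\<lambda>j. \<sigma> ` \<beta> j)(j := Q)) f)"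
  proof
    assume "\<exists>P. P \<subseteq> fst S \<and> sat S (\<sigma> \<circ> \<alpha>) ((\<lambda>j. \<sigma> ` \<beta> j)(j := \<sigma> ` P)) f"
    then obtain P where "P \<subseteq> fst S" "sat S (\<sigma> \<circ> \<alpha>) ((\<lambda>j. \<sigma> ` \<beta> j)(j := \<sigma> ` P)) f" by blast
    moreover have "\<sigma> ` P \<subseteq> fst S" using u \<open>P \<subseteq> fst S\<close> by blast
    ultimately show "\<exists>Q. Q \<subseteq> fst S \<and> sat S (\<sigma> \<circ> \<alpha>) ((\<lambda>j. \<sigma> ` \<beta> j)(j := Q)) f" by blast
  next
    assume "\<exists>Q. Q \<subseteq> fst S \<and> sat S (\<sigma> \<circ> \<alpha>) ((\<lambda>j. \<sigma> ` \<beta> j)(j := Q)) f"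
    then obtain Q where q: "Q \<subseteq> fst S" "sat S (\<sigma> \<circ> \<alpha>) ((\<lambda>j. \<sigma> ` \<beta> j)(j := Q)) f" by blast
    let ?P = "inv \<sigma> ` Q"
    have e: "\<sigma> ` ?P = Q" using b by (simp add: image_comp bij_is_surj surj_f_inv_f)
    have "?P \<subseteq> fst S"
    proof
      fix y assume "y \<in> ?P"
      then obtain x where x: "x \<in> Q" "y = inv \<sigma> x" by blast
      then obtain z where z: "z \<in> fst S" "x = \<sigma> z" using q(1) u by blast
      then have "y = z" using x b by (simp add: bij_is_inj)
      then show "y \<in> fst S" using z by simp
    qed
    then show "\<exists>P. P \<subseteq> fst S \<and> sat S (\<sigma> \<circ> \<alpha>) ((\<lambda>j. \<sigma> ` \<beta> j)(j := \<sigma> ` P)) f"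
      using q(2) e by metis
  qed
  finally show ?case by (simp add: comp_def)
qed simp_all

lemma only_if:
  assumes ord: "mso_defines_order \<phi> k (incidence_structure ` C)" and G: "G \<in> C" and K: "is_K G n m"
  shows "m \<le> 2 ^ (k * (n + 1))"
proof (rule ccontr)
  assume big: "\<not> m \<le> 2 ^ (k * (n + 1))"
  obtain A B where AB: "A \<inter> B = {}" "A \<union> B = fst G" "card A = n" "card B = m"
      "snd G = {{a, b} | a b. a \<in> A \<and> b \<in> B}" and finV: "finite (fst G)"
    using K unfolding is_K_def by blast
  have finA: "finite A" and finB: "finite B" using finV AB(2) by (metis finite_Un)+
  define V where "V = fst G"
  define E where "E = snd G"
  define S where "S = incidence_structure G"
  have S1: "fst S = Inl ` V \<union> Inr ` E" and S2: "snd S = {(Inl v, Inr e) | v e. v \<in> V \<and> e \<in> E \<and> v \<in> e}"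
    by (simp_all add: S_def incidence_structure_def V_def E_def)
  have "B \<noteq> {}" using big AB(4) by auto
  then have ne: "fst S \<noteq> {}" using S1 AB(2) V_def by auto
  have "S \<in> incidence_structure ` C" using G S_def by simp
  then obtain P where P: "\<forall>i<k. P i \<subseteq> fst S"
     and lin: "linear_order_on (fst S) {(a, b). a \<in> fst S \<and> b \<in> fst S \<and> sat S (asg2 a b) P \<phi>}"
     and fsv: "fsv \<phi> \<subseteq> {..<k}"
    using ord ne unfolding mso_defines_order_def by blast
  define prof where "prof b = {(i, None) | i. i < k \<and> Inl b \<in> P i} \<union>
                                {(i, Some a) | i a. i < k \<and> a \<in> A \<and> Inr {a, b} \<in> P i}" for b
  define X where "X = {..<k} \<times> insert None (Some ` A)"
  have cX: "card X = k * (n + 1)" unfolding X_def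
    using finA AB(3) by (simp add: card_cartesian_product card_image)
  have finX: "finite X" unfolding X_def using finA by simp
  have "prof ` B \<subseteq> Pow X" unfolding prof_def X_def by auto
  have "\<not> inj_on prof B"
  proof
    assume "inj_on prof B"
    then have "card B = card (prof ` B)" by (simp add: card_image)
    also have "\<dots> \<le> card (Pow X)" using \<open>prof ` B \<subseteq> Pow X\<close> finX by (simp add: card_mono)
    also have "\<dots> = 2 ^ (k * (n + 1))" using finX cX by (simp add: card_Pow)
    finally show False using big AB(4) by simp
  qed
  then obtain b b' where bb: "b \<in> B" "b' \<in> B" "b \<noteq> b'" "prof b = prof b'"
    unfolding inj_on_def by blast
  have pv: "Inl b \<in> P i \<longleftrightarrow> Inl b' \<in> P i" if "i < k" for i
  proof -
    have "(i, None) \<in> prof b \<longleftrightarrow> (i, None) \<in> prof b'" using bb(4) by simp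
    then show ?thesis using that unfolding prof_def by auto
  qed
  have pe: "Inr {a, b} \<in> P i \<longleftrightarrow> Inr {a, b'} \<in> P i" if "i < k" "a \<in> A" for i a
  proof -
    have "(i, Some a) \<in> prof b \<longleftrightarrow> (i, Some a) \<in> prof b'" using bb(4) by simp
    then show ?thesis using that unfolding prof_def by auto
  qed
  define \<tau> where "\<tau> v = (if v = b then b' else if v = b' then b else v)" for v
  have tt: "\<tau> (\<tau> v) = v" for v unfolding \<tau>_def by auto
  define \<sigma> where "\<sigma> = map_sum \<tau> (image \<tau>)"
  have ss: "\<sigma> (\<sigma> x) = x" for x
    unfolding \<sigma>_def by (cases x) (simp_all add: image_image tt)
  have bij: "bij \<sigma>" by (metis ss bijI injI surjI)
  have tA: "\<tau> a = a" if "a \<in> A" for a using that AB(1) bb unfolding \<tau>_def by auto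
  have tB: "\<tau> c \<in> B" if "c \<in> B" for c using that bb unfolding \<tau>_def by auto
  have tV: "\<tau> v \<in> V" if "v \<in> V" for v using that bb AB(2) V_def unfolding \<tau>_def by auto
  have tE: "\<tau> ` e \<in> E" if eE: "e \<in> E" for e
  proof -
    obtain a c where "e = {a, c}" "a \<in> A" "c \<in> B" using eE E_def AB(5) by auto
    then show ?thesis using tA tB E_def AB(5) by auto
  qed
  have sU1: "\<sigma> x \<in> fst S" if "x \<in> fst S" for x
    using that tV tE unfolding S1 \<sigma>_def by auto
  have sU: "\<sigma> ` fst S = fst S"
  proof
    show "\<sigma> ` fst S \<subseteq> fst S" using sU1 by auto
    show "fst S \<subseteq> \<sigma> ` fst S" using sU1 ss by (metis image_eqI subsetI)
  qed
  have sR1: "(\<sigma> x, \<sigma> y) \<in> snd S" if xyS: "(x, y) \<in> snd S" for x y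
  proof -
    obtain v e where "x = Inl v" "y = Inr e" "v \<in> V" "e \<in> E" "v \<in> e" using xyS S2 by auto
    then show ?thesis using tV tE unfolding S2 \<sigma>_def by auto
  qed
  have sR: "\<forall>x y. (x, y) \<in> snd S \<longleftrightarrow> (\<sigma> x, \<sigma> y) \<in> snd S"
  proof (intro allI iffI)
    fix x y
    show "(x, y) \<in> snd S \<Longrightarrow> (\<sigma> x, \<sigma> y) \<in> snd S" by (rule sR1)
    assume "(\<sigma> x, \<sigma> y) \<in> snd S"
    then have "(\<sigma> (\<sigma> x), \<sigma> (\<sigma> y)) \<in> snd S" by (rule sR1)
    then show "(x, y) \<in> snd S" by (simp only: ss)
  qed
  have sP1: "\<sigma> x \<in> P i" if "x \<in> P i" "i < k" for x i
  proof -
    have xU: "x \<in> fst S" using that P by auto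
    show ?thesis
    proof (cases x)
      case (Inl v)
      show ?thesis
      proof (cases "v = b")
        case True then show ?thesis using Inl that pv[of i] bb(3) by (simp add: \<sigma>_def \<tau>_def)
      next
        case False then show ?thesis using Inl that pv[of i] by (auto simp add: \<sigma>_def \<tau>_def)
      qed
    next
      case (Inr e)
      then have "e \<in> E" using xU S1 by auto
      then obtain a c where ac: "e = {a, c}" "a \<in> A" "c \<in> B" using E_def AB(5) by auto
      have ta: "\<tau> a = a" using tA ac by simp
      have te: "\<tau> ` e = {a, \<tau> c}" using ac ta by simp
      show ?thesis
      proof (cases "c = b")
        case True
        then have "\<tau> ` e = {a, b'}" using te by (simp add: \<tau>_def)
        then show ?thesis using Inr ac that pe[of i a] True unfolding \<sigma>_def by simp
      next
        case False note nb = this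
        show ?thesis
        proof (cases "c = b'")
          case True
          then have "\<tau> ` e = {a, b}" using te bb(3) by (simp add: \<tau>_def)
          then show ?thesis using Inr ac that pe[of i a] True unfolding \<sigma>_def by simp
        next
          case False
          then have "\<tau> ` e = e" using te ac nb by (simp add: \<tau>_def)
          then show ?thesis using Inr that unfolding \<sigma>_def by simp
        qed
      qed
    qed
  qed
  have sP: "\<sigma> ` P i = P i" if "i < k" for i
  proof
    show "\<sigma> ` P i \<subseteq> P i" using sP1 that by auto
    show "P i \<subseteq> \<sigma> ` P i" using sP1 that ss by (metis image_eqI subsetI)
  qed
  define x where "x = (Inl b :: 'a + 'a set)"
  define y where "y = (Inl b' :: 'a + 'a set)"
  have xy: "x \<in> fst S" "y \<in> fst S" "x \<noteq> y" using bb S1 AB(2) V_def x_def y_def by auto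
  have sx: "\<sigma> x = y" "\<sigma> y = x" unfolding x_def y_def \<sigma>_def \<tau>_def by auto
  have swap: "sat S (asg2 u w) P \<phi> \<longleftrightarrow> sat S (asg2 (\<sigma> u) (\<sigma> w)) P \<phi>" for u w
  proof -
    have "sat S (asg2 u w) P \<phi> \<longleftrightarrow> sat S (\<sigma> \<circ> asg2 u w) (\<lambda>j. \<sigma> ` P j) \<phi>"
      using sat_perm[OF bij sU sR] .
    also have "\<dots> \<longleftrightarrow> sat S (asg2 (\<sigma> u) (\<sigma> w)) P \<phi>"
      using fsv sP by (intro sat_cong) (auto simp: asg2_def)
    finally show ?thesis .
  qed
  have "(x, y) \<in> {(a, b). a \<in> fst S \<and> b \<in> fst S \<and> sat S (asg2 a b) P \<phi>} \<or>
        (y, x) \<in> {(a, b). a \<in> fst S \<and> b \<in> fst S \<and> sat S (asg2 a b) P \<phi>}"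
    using lin xy unfolding linear_order_on_def total_on_def by blast
  then have "sat S (asg2 x y) P \<phi> \<and> sat S (asg2 y x) P \<phi>"
  proof -
    have "sat S (asg2 x y) P \<phi> \<longleftrightarrow> sat S (asg2 y x) P \<phi>" using swap[of x y] sx by simp
    with \<open>(x, y) \<in> _ \<or> (y, x) \<in> _\<close> show ?thesis by blast
  qed
  then have "(x, y) \<in> {(a, b). a \<in> fst S \<and> b \<in> fst S \<and> sat S (asg2 a b) P \<phi>} \<and>
        (y, x) \<in> {(a, b). a \<in> fst S \<and> b \<in> fst S \<and> sat S (asg2 a b) P \<phi>}"
    using xy by auto
  then have "x = y" using lin unfolding linear_order_on_def partial_order_on_def antisym_def by blast
  then show False using xy by simp
qed

definition Or :: "mso \<Rightarrow> mso \<Rightarrow> mso" where "Or f g = Neg (Conj (Neg f) (Neg g))"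
definition Imp :: "mso \<Rightarrow> mso \<Rightarrow> mso" where "Imp f g = Or (Neg f) g"
definition Iff :: "mso \<Rightarrow> mso \<Rightarrow> mso" where "Iff f g = Conj (Imp f g) (Imp g f)"
definition AllI :: "nat \<Rightarrow> mso \<Rightarrow> mso" where "AllI i f = Neg (ExI i (Neg f))"

fun BigOr :: "nat \<Rightarrow> mso list \<Rightarrow> mso" where
  "BigOr x [] = Conj (Mem x 0) (Neg (Mem x 0))"
| "BigOr x (f # fs) = Or f (BigOr x fs)"

definition BigAnd :: "nat \<Rightarrow> mso list \<Rightarrow> mso" where "BigAnd x fs = Neg (BigOr x (map Neg fs))"

lemma sat_Or[simp]: "sat S \<alpha> \<beta> (Or f g) = (sat S \<alpha> \<beta> f \<or> sat S \<alpha> \<beta> g)" by (simp add: Or_def)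
lemma sat_Imp[simp]: "sat S \<alpha> \<beta> (Imp f g) = (sat S \<alpha> \<beta> f \<longrightarrow> sat S \<alpha> \<beta> g)" by (simp add: Imp_def)
lemma sat_Iff[simp]: "sat S \<alpha> \<beta> (Iff f g) = (sat S \<alpha> \<beta> f \<longleftrightarrow> sat S \<alpha> \<beta> g)" by (auto simp add: Iff_def)
lemma sat_AllI[simp]: "sat S \<alpha> \<beta> (AllI i f) = (\<forall>a\<in>fst S. sat S (\<alpha>(i := a)) \<beta> f)" by (simp add: AllI_def)
lemma sat_BigOr[simp]: "sat S \<alpha> \<beta> (BigOr x fs) = (\<exists>f\<in>set fs. sat S \<alpha> \<beta> f)" by (induction fs) auto
lemma sat_BigAnd[simp]: "sat S \<alpha> \<beta> (BigAnd x fs) = (\<forall>f\<in>set fs. sat S \<alpha> \<beta> f)" by (simp add: BigAnd_def)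

lemma fv_Or[simp]: "fv (Or f g) = fv f \<union> fv g" by (simp add: Or_def)
lemma fv_Imp[simp]: "fv (Imp f g) = fv f \<union> fv g" by (simp add: Imp_def)
lemma fv_Iff[simp]: "fv (Iff f g) = fv f \<union> fv g" by (auto simp add: Iff_def)
lemma fv_AllI[simp]: "fv (AllI i f) = fv f - {i}" by (simp add: AllI_def)
lemma fv_BigOr[simp]: "fv (BigOr x fs) = {x} \<union> (\<Union>f\<in>set fs. fv f)" by (induction fs) auto
lemma fv_BigAnd[simp]: "fv (BigAnd x fs) = {x} \<union> (\<Union>f\<in>set fs. fv f)" by (simp add: BigAnd_def)
lemma fsv_Or[simp]: "fsv (Or f g) = fsv f \<union> fsv g" by (simp add: Or_def)
lemma fsv_Imp[simp]: "fsv (Imp f g) = fsv f \<union> fsv g" by (simp add: Imp_def)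
lemma fsv_Iff[simp]: "fsv (Iff f g) = fsv f \<union> fsv g" by (auto simp add: Iff_def)
lemma fsv_AllI[simp]: "fsv (AllI i f) = fsv f" by (simp add: AllI_def)
lemma fsv_BigOr[simp]: "fsv (BigOr x fs) = {0} \<union> (\<Union>f\<in>set fs. fsv f)" by (induction fs) auto
lemma fsv_BigAnd[simp]: "fsv (BigAnd x fs) = {0} \<union> (\<Union>f\<in>set fs. fsv f)" by (simp add: BigAnd_def)

definition colLess :: "nat \<Rightarrow> nat \<Rightarrow> nat \<Rightarrow> mso" where
  "colLess K u v = BigOr u (concat (map (\<lambda>d. map (\<lambda>c. Conj (Mem u (4+c)) (Mem v (4+d))) [0..<d]) [0..<K]))"
definition colEq :: "nat \<Rightarrow> nat \<Rightarrow> nat \<Rightarrow> mso" where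
  "colEq K u v = BigAnd u (map (\<lambda>c. Iff (Mem u (4+c)) (Mem v (4+c))) [0..<K])"

lemma fv_colLess: "fv (colLess K u v) \<subseteq> {u, v}" by (auto simp: colLess_def)
lemma fv_colEq: "fv (colEq K u v) \<subseteq> {u, v}" by (auto simp: colEq_def)
lemma fsv_colLess: "fsv (colLess K u v) \<subseteq> {..<4+K}" by (auto simp: colLess_def)
lemma fsv_colEq: "fsv (colEq K u v) \<subseteq> {..<4+K}" by (auto simp: colEq_def)

lemma col_sem:
  assumes "\<forall>c<K. (\<alpha> u \<in> \<beta> (4+c)) = (c = x)" "\<forall>c<K. (\<alpha> v \<in> \<beta> (4+c)) = (c = y)" "x < K" "y < K"
  shows "sat S \<alpha> \<beta> (colLess K u v) \<longleftrightarrow> x < y" and "sat S \<alpha> \<beta> (colEq K u v) \<longleftrightarrow> x = y"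
  using assms by (auto simp: colLess_def colEq_def)

definition lessA :: "nat \<Rightarrow> nat \<Rightarrow> mso" where
  "lessA u v = (let t = Suc (u + v) in
     ExI t (ExI (t+1) (ExI (t+2) (BigAnd t [Mem (t+1) 2, Rel v (t+1), Rel t (t+1), Mem t 1,
                                           Mem (t+2) 3, Rel u (t+2), Rel t (t+2)]))))"

definition edgeCmp :: "(nat \<Rightarrow> nat \<Rightarrow> mso) \<Rightarrow> nat \<Rightarrow> nat \<Rightarrow> nat \<Rightarrow> nat \<Rightarrow> nat \<Rightarrow> mso" where
  "edgeCmp C a u v e e' = ExI e (ExI e' (BigAnd a [Rel a e, Rel u e, Rel a e', Rel v e', C e e']))"

definition lessB :: "nat \<Rightarrow> nat \<Rightarrow> nat \<Rightarrow> mso" where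
  "lessB K u v = (let t = Suc (u + v) in
     Or (colLess K u v) (Conj (colEq K u v) (ExI t (Conj (Mem t 0) (Conj
        (edgeCmp (colLess K) t u v (t+2) (t+3))
        (AllI (t+1) (Imp (Conj (Mem (t+1) 0) (lessA (t+1) t)) (edgeCmp (colEq K) (t+1) u v (t+2) (t+3)))))))))"

definition lessE :: "nat \<Rightarrow> nat \<Rightarrow> nat \<Rightarrow> mso" where
  "lessE K u v = (let t = Suc (u + v) in
     ExI t (ExI (t+1) (ExI (t+2) (ExI (t+3) (BigAnd t [Mem t 0, Rel t u, Mem (t+1) 1, Rel (t+1) u,
        Mem (t+2) 0, Rel (t+2) v, Mem (t+3) 1, Rel (t+3) v,
        Or (lessA t (t+2)) (Conj (Eq t (t+2)) (lessB K (t+1) (t+3)))])))))"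

definition isE :: "nat \<Rightarrow> mso" where "isE x = Conj (Neg (Mem x 0)) (Neg (Mem x 1))"

definition phi :: "nat \<Rightarrow> mso" where
  "phi K = Or (Eq 0 1) (BigOr 0 [BigAnd 0 [Mem 0 0, Mem 1 0, lessA 0 1], Conj (Mem 0 0) (Neg (Mem 1 0)),
      BigAnd 0 [Mem 0 1, Mem 1 1, lessB K 0 1], Conj (Mem 0 1) (isE 1),
      BigAnd 0 [isE 0, isE 1, lessE K 0 1]])"

lemma fv_lessA: "fv (lessA u v) \<subseteq> {u, v}" by (auto simp: lessA_def Let_def)
lemma fsv_lessA: "fsv (lessA u v) \<subseteq> {..<4}" by (auto simp: lessA_def Let_def)
lemma fv_edgeCmp: "fv (C e e') \<subseteq> {e, e'} \<Longrightarrow> fv (edgeCmp C a u v e e') \<subseteq> {a, u, v}"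
  by (auto simp: edgeCmp_def)
lemma fsv_edgeCmp: "fsv (C e e') \<subseteq> {..<4+K} \<Longrightarrow> fsv (edgeCmp C a u v e e') \<subseteq> {..<4+K}"
  by (auto simp: edgeCmp_def)
lemma fv_lessB: "fv (lessB K u v) \<subseteq> {u, v}"
proof -
  let ?t = "Suc (u+v)"
  have 1: "fv (edgeCmp (colLess K) ?t u v (?t+2) (?t+3)) \<subseteq> {?t, u, v}" by (rule fv_edgeCmp[OF fv_colLess])
  have 2: "fv (edgeCmp (colEq K) (?t+1) u v (?t+2) (?t+3)) \<subseteq> {?t+1, u, v}" by (rule fv_edgeCmp[OF fv_colEq])
  have 3: "fv (lessA (?t+1) ?t) \<subseteq> {?t+1, ?t}" by (rule fv_lessA)
  show ?thesis using 1 2 3 fv_colLess[of K u v] fv_colEq[of K u v] unfolding lessB_def Let_def by auto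
qed
lemma fsv_lessB: "fsv (lessB K u v) \<subseteq> {..<4+K}"
proof -
  let ?t = "Suc (u+v)"
  have 1: "fsv (edgeCmp (colLess K) ?t u v (?t+2) (?t+3)) \<subseteq> {..<4+K}" by (rule fsv_edgeCmp[OF fsv_colLess])
  have 2: "fsv (edgeCmp (colEq K) (?t+1) u v (?t+2) (?t+3)) \<subseteq> {..<4+K}" by (rule fsv_edgeCmp[OF fsv_colEq])
  show ?thesis using 1 2 fsv_lessA[of "?t+1" ?t] fsv_colLess[of K u v] fsv_colEq[of K u v] unfolding lessB_def Let_def by auto
qed
lemma fv_lessE: "fv (lessE K u v) \<subseteq> {u, v}"
proof -
  let ?t = "Suc (u+v)"
  show ?thesis using fv_lessA[of ?t "?t+2"] fv_lessB[of K "?t+1" "?t+3"] unfolding lessE_def Let_def by auto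
qed
lemma fsv_lessE: "fsv (lessE K u v) \<subseteq> {..<4+K}"
proof -
  let ?t = "Suc (u+v)"
  show ?thesis using fsv_lessA[of ?t "?t+2"] fsv_lessB[of K "?t+1" "?t+3"] unfolding lessE_def Let_def by auto
qed
lemma fv_phi: "fv (phi K) \<subseteq> {0, 1}"
  using fv_lessA[of 0 1] fv_lessB[of K 0 1] fv_lessE[of K 0 1] by (auto simp: phi_def isE_def)
lemma fsv_phi: "fsv (phi K) \<subseteq> {..<4+K}"
  using fsv_lessA[of 0 1] fsv_lessB[of K 0 1] fsv_lessE[of K 0 1] by (auto simp: phi_def isE_def)

lemma lex_nth:
  fixes xs ys :: "nat list"
  assumes "length xs = length ys"
  shows "xs < ys \<longleftrightarrow> (\<exists>i<length xs. xs ! i < ys ! i \<and> (\<forall>j<i. xs ! j = ys ! j))"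
proof -
  have tk: "take i xs = take i ys \<longleftrightarrow> (\<forall>j<i. xs ! j = ys ! j)" if "i < length xs" for i
    using that assms by (simp add: list_eq_iff_nth_eq)
  show ?thesis
    unfolding list_less_def lexord_take_index_conv using assms tk by auto
qed

lemma lex_code:
  fixes xs ys :: "nat list"
  assumes "length xs = Suc n" "length ys = Suc n"
  shows "xs < ys \<longleftrightarrow> (xs ! 0 < ys ! 0 \<or> (xs ! 0 = ys ! 0 \<and>
      (\<exists>i<n. xs ! Suc i < ys ! Suc i \<and> (\<forall>j<n. j < i \<longrightarrow> xs ! Suc j = ys ! Suc j))))"
proof -
  have "xs < ys \<longleftrightarrow> (\<exists>i<Suc n. xs ! i < ys ! i \<and> (\<forall>j<i. xs ! j = ys ! j))"
    using lex_nth assms by simp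
  also have "\<dots> \<longleftrightarrow> (xs ! 0 < ys ! 0 \<or> (\<exists>i<n. xs ! Suc i < ys ! Suc i \<and> (\<forall>j<Suc i. xs ! j = ys ! j)))"
    unfolding Ex_less_Suc2 by simp
  also have "\<dots> \<longleftrightarrow> (xs ! 0 < ys ! 0 \<or> (xs ! 0 = ys ! 0 \<and>
      (\<exists>i<n. xs ! Suc i < ys ! Suc i \<and> (\<forall>j<n. j < i \<longrightarrow> xs ! Suc j = ys ! Suc j))))"
  proof -
    have "(\<forall>j<Suc i. xs ! j = ys ! j) \<longleftrightarrow> xs ! 0 = ys ! 0 \<and> (\<forall>j<n. j < i \<longrightarrow> xs ! Suc j = ys ! Suc j)"
      if "i < n" for i
      using that unfolding All_less_Suc2 by auto
    then show ?thesis by (auto cong: conj_cong)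
  qed
  finally show ?thesis .
qed

locale KS =
  fixes A B :: "'v set" and f :: "nat \<Rightarrow> 'v" and n :: nat and mu :: "'v \<Rightarrow> 'v"
    and code :: "'v \<Rightarrow> nat list" and K :: nat
  assumes disj: "A \<inter> B = {}"
    and f_inj: "inj_on f {..<n}" and f_img: "f ` {..<n} = A"
    and mu_inj: "inj_on mu A" and mu_img: "mu ` A \<subseteq> B"
    and code_inj: "inj_on code B" and code_len: "\<forall>b\<in>B. length (code b) = Suc n"
    and code_set: "\<forall>b\<in>B. set (code b) \<subseteq> {..<K}"
begin

definition E :: "'v set set" where "E = {{a, b} | a b. a \<in> A \<and> b \<in> B}"
definition U :: "('v + 'v set) set" where "U = Inl ` (A \<union> B) \<union> Inr ` E"
definition R :: "(('v + 'v set) \<times> ('v + 'v set)) set" where "R = {(Inl v, Inr e) | v e. v \<in> A \<union> B \<and> e \<in> E \<and> v \<in> e}"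
definition ZM :: "('v + 'v set) set" where "ZM = {Inr {f i, mu (f i)} | i. i < n}"
definition ZP :: "('v + 'v set) set" where "ZP = {Inr {f i, mu (f j)} | i j. i < j \<and> j < n}"
definition Q :: "nat \<Rightarrow> ('v + 'v set) set" where "Q c = {Inl b | b. b \<in> B \<and> code b ! 0 = c} \<union> {Inr {f i, b} | i b. i < n \<and> b \<in> B \<and> code b ! Suc i = c}"
definition \<beta> :: "nat \<Rightarrow> ('v + 'v set) set" where "\<beta> j = (if j = 0 then Inl ` A else if j = 1 then Inl ` B else if j = 2 then ZM
                   else if j = 3 then ZP else Q (j - 4))"

lemma \<beta>_simps[simp]: "\<beta> 0 = Inl ` A" "\<beta> 1 = Inl ` B" "\<beta> 2 = ZM" "\<beta> 3 = ZP" "\<beta> (4 + c) = Q c" "\<beta> (Suc 0) = Inl ` B"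
  by (simp_all add: \<beta>_def)

lemma fA[simp]: "i < n \<Longrightarrow> f i \<in> A" using f_img by auto
lemma f_eq[simp]: "i < n \<Longrightarrow> j < n \<Longrightarrow> f i = f j \<longleftrightarrow> i = j" using f_inj by (auto simp: inj_on_def)
lemma muB[simp]: "a \<in> A \<Longrightarrow> mu a \<in> B" using mu_img by auto
lemma mu_eq[simp]: "a \<in> A \<Longrightarrow> a' \<in> A \<Longrightarrow> mu a = mu a' \<longleftrightarrow> a = a'" using mu_inj by (auto simp: inj_on_def)
lemma AB_ne: "a \<in> A \<Longrightarrow> b \<in> B \<Longrightarrow> a \<noteq> b" using disj by auto
lemma A_notB: "a \<in> A \<Longrightarrow> a \<notin> B" using disj by auto

lemma in_edge:
  assumes "a \<in> A" "b \<in> B" "z \<in> {a, b}"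
  shows "z \<in> A \<Longrightarrow> z = a" and "z \<in> B \<Longrightarrow> z = b"
  using assms disj by auto

lemma edge_eq: "a \<in> A \<Longrightarrow> b \<in> B \<Longrightarrow> a' \<in> A \<Longrightarrow> b' \<in> B \<Longrightarrow> {a, b} = {a', b'} \<longleftrightarrow> a = a' \<and> b = b'"
  using disj by (auto simp: doubleton_eq_iff)

lemma inE[simp]: "a \<in> A \<Longrightarrow> b \<in> B \<Longrightarrow> {a, b} \<in> E" by (auto simp: E_def)

lemma R_iff: "(x, y) \<in> R \<longleftrightarrow> (\<exists>v e. x = Inl v \<and> y = Inr e \<and> v \<in> A \<union> B \<and> e \<in> E \<and> v \<in> e)"
  by (auto simp: R_def)

lemma edge_unique:
  assumes "(Inl a, x) \<in> R" "(Inl b, x) \<in> R" "a \<in> A" "b \<in> B"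
  shows "x = Inr {a, b}"
proof -
  obtain e where x: "x = Inr e" "e \<in> E" "a \<in> e" "b \<in> e" using assms(1,2) by (auto simp: R_def)
  then obtain a0 b0 where e: "e = {a0, b0}" "a0 \<in> A" "b0 \<in> B" by (auto simp: E_def)
  have "a = a0" using in_edge(1)[OF e(2,3)] x e assms(3) by auto
  moreover have "b = b0" using in_edge(2)[OF e(2,3)] x e assms(4) by auto
  ultimately show ?thesis using x e by simp
qed

lemma R_edge: "v \<in> A \<union> B \<Longrightarrow> e \<in> E \<Longrightarrow> v \<in> e \<Longrightarrow> (Inl v, Inr e) \<in> R" by (auto simp: R_def)

lemma U_cases:
  assumes "x \<in> U"
  obtains (A) i where "i < n" "x = Inl (f i)"
        | (B) b where "b \<in> B" "x = Inl b"
        | (E) i b where "i < n" "b \<in> B" "x = Inr {f i, b}"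
  using assms f_img unfolding U_def E_def by blast

lemma U_intros: "i < n \<Longrightarrow> Inl (f i) \<in> U" "b \<in> B \<Longrightarrow> Inl b \<in> U" "i < n \<Longrightarrow> b \<in> B \<Longrightarrow> Inr {f i, b} \<in> U"
  by (auto simp: U_def)

lemma Q_Inl: "Inl b \<in> Q c \<longleftrightarrow> b \<in> B \<and> code b ! 0 = c" by (auto simp: Q_def)
lemma Q_Inr: "i < n \<Longrightarrow> b \<in> B \<Longrightarrow> Inr {f i, b} \<in> Q c \<longleftrightarrow> code b ! Suc i = c"
proof -
  assume i: "i < n" and b: "b \<in> B"
  have "Inr {f i, b} \<in> Q c \<longleftrightarrow> (\<exists>i' b'. i' < n \<and> b' \<in> B \<and> code b' ! Suc i' = c \<and> {f i, b} = {f i', b'})"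
    by (auto simp: Q_def)
  also have "\<dots> \<longleftrightarrow> code b ! Suc i = c" using i b edge_eq by auto
  finally show ?thesis .
qed

lemma code_lt: "b \<in> B \<Longrightarrow> j \<le> n \<Longrightarrow> code b ! j < K"
  using code_len code_set by (metis le_imp_less_Suc lessThan_iff nth_mem subsetD)

lemma code_eq: "b \<in> B \<Longrightarrow> b' \<in> B \<Longrightarrow> code b = code b' \<longleftrightarrow> b = b'"
  using code_inj by (auto simp: inj_on_def)

lemma S_simps: "fst (U, R) = U" "snd (U, R) = R" by simp_all


lemma sem_lessA:
  assumes au: "\<alpha> u = Inl (f i)" and av: "\<alpha> v = Inl (f j)" and i: "i < n" and j: "j < n"
  shows "sat (U, R) \<alpha> \<beta> (lessA u v) \<longleftrightarrow> i < j"
proof -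
  have "sat (U, R) \<alpha> \<beta> (lessA u v) \<longleftrightarrow> (\<exists>x\<in>U. \<exists>y\<in>U. \<exists>z\<in>U. y \<in> ZM \<and> (Inl (f j), y) \<in> R \<and> (x, y) \<in> R \<and>
       x \<in> Inl ` B \<and> z \<in> ZP \<and> (Inl (f i), z) \<in> R \<and> (x, z) \<in> R)"
    using au av by (simp add: lessA_def Let_def)
  also have "\<dots> \<longleftrightarrow> i < j"
  proof
    assume "\<exists>x\<in>U. \<exists>y\<in>U. \<exists>z\<in>U. y \<in> ZM \<and> (Inl (f j), y) \<in> R \<and> (x, y) \<in> R \<and>
       x \<in> Inl ` B \<and> z \<in> ZP \<and> (Inl (f i), z) \<in> R \<and> (x, z) \<in> R"
    then obtain x y z where h: "y \<in> ZM" "(Inl (f j), y) \<in> R" "(x, y) \<in> R"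
       "x \<in> Inl ` B" "z \<in> ZP" "(Inl (f i), z) \<in> R" "(x, z) \<in> R" by blast
    obtain j' where j': "j' < n" "y = Inr {f j', mu (f j')}" using h(1) by (auto simp: ZM_def)
    obtain b0 where b0: "b0 \<in> B" "x = Inl b0" using h(4) by auto
    have "f j \<in> {f j', mu (f j')}" using h(2) j' by (auto simp: R_def)
    then have "j = j'" using in_edge(1)[of "f j'" "mu (f j')" "f j"] j' j by auto
    have "b0 \<in> {f j', mu (f j')}" using h(3) j' b0 by (auto simp: R_def)
    then have b0e: "b0 = mu (f j)" using in_edge(2)[of "f j'" "mu (f j')" b0] j' b0 \<open>j = j'\<close> by auto
    obtain i' j'' where z: "i' < j''" "j'' < n" "z = Inr {f i', mu (f j'')}" using h(5) by (auto simp: ZP_def)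
    have "f i \<in> {f i', mu (f j'')}" using h(6) z by (auto simp: R_def)
    then have "i = i'" using in_edge(1)[of "f i'" "mu (f j'')" "f i"] z i by auto
    have "b0 \<in> {f i', mu (f j'')}" using h(7) z b0 by (auto simp: R_def)
    then have "b0 = mu (f j'')" using in_edge(2)[of "f i'" "mu (f j'')" b0] z b0 by auto
    then have "j = j''" using b0e z j by simp
    then show "i < j" using z \<open>i = i'\<close> by simp
  next
    assume ij: "i < j"
    let ?x = "Inl (mu (f j)) :: 'v + 'v set"
    let ?y = "Inr {f j, mu (f j)} :: 'v + 'v set"
    let ?z = "Inr {f i, mu (f j)} :: 'v + 'v set"
    have "?x \<in> U" "?y \<in> U" "?z \<in> U" using i j U_intros by auto
    moreover have "?y \<in> ZM" using j by (auto simp: ZM_def)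
    moreover have "?z \<in> ZP" using ij j by (auto simp: ZP_def)
    moreover have "(Inl (f j), ?y) \<in> R" "(?x, ?y) \<in> R" "(Inl (f i), ?z) \<in> R" "(?x, ?z) \<in> R"
      using i j by (auto intro!: R_edge)
    moreover have "?x \<in> Inl ` B" using j by auto
    ultimately show "\<exists>x\<in>U. \<exists>y\<in>U. \<exists>z\<in>U. y \<in> ZM \<and> (Inl (f j), y) \<in> R \<and> (x, y) \<in> R \<and>
       x \<in> Inl ` B \<and> z \<in> ZP \<and> (Inl (f i), z) \<in> R \<and> (x, z) \<in> R" by blast
  qed
  finally show ?thesis .
qed


lemma sem_edgeCmp:
  assumes aa: "\<alpha> a = Inl (f i)" and au: "\<alpha> u = Inl b" and av: "\<alpha> v = Inl b'"
    and i: "i < n" and b: "b \<in> B" and b': "b' \<in> B"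
    and ne: "e \<noteq> a" "e \<noteq> u" "e \<noteq> v" "e' \<noteq> a" "e' \<noteq> u" "e' \<noteq> v" "e \<noteq> e'"
    and C: "\<And>\<alpha>'. \<alpha>' e = Inr {f i, b} \<Longrightarrow> \<alpha>' e' = Inr {f i, b'} \<Longrightarrow> sat (U, R) \<alpha>' \<beta> (C e e') \<longleftrightarrow> Pr"
  shows "sat (U, R) \<alpha> \<beta> (edgeCmp C a u v e e') \<longleftrightarrow> Pr"
proof -
  have "sat (U, R) \<alpha> \<beta> (edgeCmp C a u v e e') \<longleftrightarrow>
     (\<exists>x\<in>U. \<exists>y\<in>U. (Inl (f i), x) \<in> R \<and> (Inl b, x) \<in> R \<and> (Inl (f i), y) \<in> R \<and> (Inl b', y) \<in> R \<and>
        sat (U, R) (\<alpha>(e := x, e' := y)) \<beta> (C e e'))"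
    using aa au av ne by (simp add: edgeCmp_def)
  also have "\<dots> \<longleftrightarrow> Pr"
  proof
    assume "\<exists>x\<in>U. \<exists>y\<in>U. (Inl (f i), x) \<in> R \<and> (Inl b, x) \<in> R \<and> (Inl (f i), y) \<in> R \<and> (Inl b', y) \<in> R \<and>
        sat (U, R) (\<alpha>(e := x, e' := y)) \<beta> (C e e')"
    then obtain x y where h: "(Inl (f i), x) \<in> R" "(Inl b, x) \<in> R" "(Inl (f i), y) \<in> R" "(Inl b', y) \<in> R"
       "sat (U, R) (\<alpha>(e := x, e' := y)) \<beta> (C e e')" by blast
    have "x = Inr {f i, b}" using edge_unique[OF h(1) h(2)] i b by simp
    moreover have "y = Inr {f i, b'}" using edge_unique[OF h(3) h(4)] i b' by simp
    ultimately show Pr using C h(5) ne by simp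
  next
    assume Pr
    let ?x = "Inr {f i, b} :: 'v + 'v set" and ?y = "Inr {f i, b'} :: 'v + 'v set"
    have "?x \<in> U" "?y \<in> U" using i b b' U_intros by auto
    moreover have "(Inl (f i), ?x) \<in> R" "(Inl b, ?x) \<in> R" "(Inl (f i), ?y) \<in> R" "(Inl b', ?y) \<in> R"
      using i b b' by (auto intro!: R_edge)
    moreover have "sat (U, R) (\<alpha>(e := ?x, e' := ?y)) \<beta> (C e e')" using C \<open>Pr\<close> ne by simp
    ultimately show "\<exists>x\<in>U. \<exists>y\<in>U. (Inl (f i), x) \<in> R \<and> (Inl b, x) \<in> R \<and> (Inl (f i), y) \<in> R \<and> (Inl b', y) \<in> R \<and>
        sat (U, R) (\<alpha>(e := x, e' := y)) \<beta> (C e e')" by blast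
  qed
  finally show ?thesis .
qed

lemma sem_col_edge:
  assumes "\<alpha>' e = Inr {f i, b}" "\<alpha>' e' = Inr {f i, b'}" "i < n" "b \<in> B" "b' \<in> B"
  shows "sat (U, R) \<alpha>' \<beta> (colLess K e e') \<longleftrightarrow> code b ! Suc i < code b' ! Suc i"
    and "sat (U, R) \<alpha>' \<beta> (colEq K e e') \<longleftrightarrow> code b ! Suc i = code b' ! Suc i"
proof -
  have h1: "\<forall>c<K. (\<alpha>' e \<in> \<beta> (4+c)) = (c = code b ! Suc i)" using assms(1,3,4) Q_Inr by auto
  have h2: "\<forall>c<K. (\<alpha>' e' \<in> \<beta> (4+c)) = (c = code b' ! Suc i)" using assms(2,3,5) Q_Inr by auto
  have h3: "code b ! Suc i < K" "code b' ! Suc i < K" using assms(3,4,5) code_lt by auto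
  show "sat (U, R) \<alpha>' \<beta> (colLess K e e') \<longleftrightarrow> code b ! Suc i < code b' ! Suc i"
    using col_sem(1)[OF h1 h2 h3] .
  show "sat (U, R) \<alpha>' \<beta> (colEq K e e') \<longleftrightarrow> code b ! Suc i = code b' ! Suc i"
    using col_sem(2)[OF h1 h2 h3] .
qed

lemma sem_col_B:
  assumes "\<alpha> u = Inl b" "\<alpha> v = Inl b'" "b \<in> B" "b' \<in> B"
  shows "sat (U, R) \<alpha> \<beta> (colLess K u v) \<longleftrightarrow> code b ! 0 < code b' ! 0"
    and "sat (U, R) \<alpha> \<beta> (colEq K u v) \<longleftrightarrow> code b ! 0 = code b' ! 0"
proof -
  have h1: "\<forall>c<K. (\<alpha> u \<in> \<beta> (4+c)) = (c = code b ! 0)" using assms(1,3) Q_Inl by auto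
  have h2: "\<forall>c<K. (\<alpha> v \<in> \<beta> (4+c)) = (c = code b' ! 0)" using assms(2,4) Q_Inl by auto
  have h3: "code b ! 0 < K" "code b' ! 0 < K" using assms(3,4) code_lt by auto
  show "sat (U, R) \<alpha> \<beta> (colLess K u v) \<longleftrightarrow> code b ! 0 < code b' ! 0"
    using col_sem(1)[OF h1 h2 h3] .
  show "sat (U, R) \<alpha> \<beta> (colEq K u v) \<longleftrightarrow> code b ! 0 = code b' ! 0"
    using col_sem(2)[OF h1 h2 h3] .
qed

lemma sem_lessB:
  assumes au: "\<alpha> u = Inl b" and av: "\<alpha> v = Inl b'" and b: "b \<in> B" and b': "b' \<in> B"
  shows "sat (U, R) \<alpha> \<beta> (lessB K u v) \<longleftrightarrow> (code b ! 0 < code b' ! 0 \<or> (code b ! 0 = code b' ! 0 \<and>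
      (\<exists>i<n. code b ! Suc i < code b' ! Suc i \<and> (\<forall>j<n. j < i \<longrightarrow> code b ! Suc j = code b' ! Suc j))))"
proof -
  let ?t = "Suc (u + v)"
  let ?F = "Conj (Mem ?t 0) (Conj (edgeCmp (colLess K) ?t u v (?t+2) (?t+3))
        (AllI (?t+1) (Imp (Conj (Mem (?t+1) 0) (lessA (?t+1) ?t)) (edgeCmp (colEq K) (?t+1) u v (?t+2) (?t+3)))))"
  have key: "sat (U, R) (\<alpha>(?t := a)) \<beta> ?F \<longleftrightarrow>
      (\<exists>i<n. a = Inl (f i) \<and> code b ! Suc i < code b' ! Suc i \<and> (\<forall>j<n. j < i \<longrightarrow> code b ! Suc j = code b' ! Suc j))"
    if aU: "a \<in> U" for a
  proof (cases "a \<in> Inl ` A")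
    case False
    then have "\<not> (\<exists>i<n. a = Inl (f i))" by auto
    then show ?thesis using False by auto
  next
    case True
    then obtain i where i: "i < n" "a = Inl (f i)" using f_img by auto
    have e1: "sat (U, R) (\<alpha>(?t := a)) \<beta> (edgeCmp (colLess K) ?t u v (?t+2) (?t+3)) \<longleftrightarrow> code b ! Suc i < code b' ! Suc i"
      by (rule sem_edgeCmp[where i = i and b = b and b' = b']) (use i au av b b' sem_col_edge in auto)
    have e2: "sat (U, R) (\<alpha>(?t := a, ?t+1 := a')) \<beta> (Imp (Conj (Mem (?t+1) 0) (lessA (?t+1) ?t)) (edgeCmp (colEq K) (?t+1) u v (?t+2) (?t+3)))
       \<longleftrightarrow> (\<forall>j<n. a' = Inl (f j) \<longrightarrow> j < i \<longrightarrow> code b ! Suc j = code b' ! Suc j)" if "a' \<in> U" for a'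
    proof (cases "a' \<in> Inl ` A")
      case False
      then show ?thesis by auto
    next
      case True
      then obtain j where j: "j < n" "a' = Inl (f j)" using f_img by auto
      have l: "sat (U, R) (\<alpha>(?t := a, ?t+1 := a')) \<beta> (lessA (?t+1) ?t) \<longleftrightarrow> j < i"
        by (rule sem_lessA) (use i j in auto)
      have e: "sat (U, R) (\<alpha>(?t := a, ?t+1 := a')) \<beta> (edgeCmp (colEq K) (?t+1) u v (?t+2) (?t+3)) \<longleftrightarrow> code b ! Suc j = code b' ! Suc j"
        by (rule sem_edgeCmp[where i = j and b = b and b' = b']) (use j au av b b' sem_col_edge in auto)
      show ?thesis using l e j True by auto
    qed
    have "sat (U, R) (\<alpha>(?t := a)) \<beta> ?F \<longleftrightarrow> code b ! Suc i < code b' ! Suc i \<and>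
        (\<forall>a'\<in>U. \<forall>j<n. a' = Inl (f j) \<longrightarrow> j < i \<longrightarrow> code b ! Suc j = code b' ! Suc j)"
      using e1 e2 True by simp
    also have "\<dots> \<longleftrightarrow> code b ! Suc i < code b' ! Suc i \<and> (\<forall>j<n. j < i \<longrightarrow> code b ! Suc j = code b' ! Suc j)"
      using U_intros(1) by blast
    finally show ?thesis using i by auto
  qed
  have "sat (U, R) \<alpha> \<beta> (lessB K u v) \<longleftrightarrow> sat (U, R) \<alpha> \<beta> (colLess K u v) \<or>
     (sat (U, R) \<alpha> \<beta> (colEq K u v) \<and> (\<exists>a\<in>U. sat (U, R) (\<alpha>(?t := a)) \<beta> ?F))"
    by (simp add: lessB_def Let_def del: sat_AllI sat_Imp)
  also have "(\<exists>a\<in>U. sat (U, R) (\<alpha>(?t := a)) \<beta> ?F) \<longleftrightarrow>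
     (\<exists>i<n. code b ! Suc i < code b' ! Suc i \<and> (\<forall>j<n. j < i \<longrightarrow> code b ! Suc j = code b' ! Suc j))"
    using key U_intros(1) by blast
  finally show ?thesis using sem_col_B[OF au av b b'] by simp
qed


lemma R_Inl_edge: "i < n \<Longrightarrow> b \<in> B \<Longrightarrow> (Inl x, Inr {f i, b}) \<in> R \<longleftrightarrow> (x = f i \<or> x = b)"
  by (auto simp: R_def)

lemma pickA: "a \<in> Inl ` A \<Longrightarrow> (a, Inr {f i, b}) \<in> R \<Longrightarrow> i < n \<Longrightarrow> b \<in> B \<Longrightarrow> a = Inl (f i)"
proof -
  assume h: "a \<in> Inl ` A" "(a, Inr {f i, b}) \<in> R" "i < n" "b \<in> B"
  then obtain a0 where a0: "a = Inl a0" "a0 \<in> A" by auto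
  then have "a0 = f i \<or> a0 = b" using h R_Inl_edge by simp
  then show ?thesis using a0 h(4) A_notB by auto
qed

lemma pickB: "a \<in> Inl ` B \<Longrightarrow> (a, Inr {f i, b}) \<in> R \<Longrightarrow> i < n \<Longrightarrow> b \<in> B \<Longrightarrow> a = Inl b"
proof -
  assume h: "a \<in> Inl ` B" "(a, Inr {f i, b}) \<in> R" "i < n" "b \<in> B"
  then obtain a0 where a0: "a = Inl a0" "a0 \<in> B" by auto
  then have "a0 = f i \<or> a0 = b" using h R_Inl_edge by simp
  then show ?thesis using a0 h(3) A_notB fA by blast
qed

lemma sem_lessE:
  assumes au: "\<alpha> u = Inr {f i, b}" and av: "\<alpha> v = Inr {f j, b'}" and i: "i < n" and j: "j < n"
    and b: "b \<in> B" and b': "b' \<in> B"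
  shows "sat (U, R) \<alpha> \<beta> (lessE K u v) \<longleftrightarrow> (i < j \<or> (i = j \<and> code b < code b'))"
proof -
  let ?t = "Suc (u + v)"
  let ?Body = "BigAnd ?t [Mem ?t 0, Rel ?t u, Mem (?t+1) 1, Rel (?t+1) u,
        Mem (?t+2) 0, Rel (?t+2) v, Mem (?t+3) 1, Rel (?t+3) v,
        Or (lessA ?t (?t+2)) (Conj (Eq ?t (?t+2)) (lessB K (?t+1) (?t+3)))]"
  have unf: "sat (U, R) \<alpha> \<beta> (lessE K u v) \<longleftrightarrow>
      (\<exists>a\<in>U. \<exists>bb\<in>U. \<exists>a'\<in>U. \<exists>bb'\<in>U. sat (U, R) (\<alpha>(?t := a, ?t+1 := bb, ?t+2 := a', ?t+3 := bb')) \<beta> ?Body)"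
    by (simp only: lessE_def Let_def sat.simps fst_conv)
  have body: "sat (U, R) (\<alpha>(?t := a, ?t+1 := bb, ?t+2 := a', ?t+3 := bb')) \<beta> ?Body \<longleftrightarrow>
     (a = Inl (f i) \<and> bb = Inl b \<and> a' = Inl (f j) \<and> bb' = Inl b' \<and> (i < j \<or> (i = j \<and> code b < code b')))" for a bb a' bb'
  proof -
    define \<alpha>' where "\<alpha>' = \<alpha>(?t := a, ?t+1 := bb, ?t+2 := a', ?t+3 := bb')"
    have af: "\<alpha>' ?t = a" "\<alpha>' (?t+1) = bb" "\<alpha>' (?t+2) = a'" "\<alpha>' (?t+3) = bb'" "\<alpha>' u = Inr {f i, b}" "\<alpha>' v = Inr {f j, b'}"
      using au av by (simp_all add: \<alpha>'_def)
    have "sat (U, R) \<alpha>' \<beta> ?Body \<longleftrightarrow> a \<in> Inl ` A \<and> (a, Inr {f i, b}) \<in> R \<and> bb \<in> Inl ` B \<and> (bb, Inr {f i, b}) \<in> R \<and>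
       a' \<in> Inl ` A \<and> (a', Inr {f j, b'}) \<in> R \<and> bb' \<in> Inl ` B \<and> (bb', Inr {f j, b'}) \<in> R \<and>
       (sat (U, R) \<alpha>' \<beta> (lessA ?t (?t+2)) \<or> (a = a' \<and> sat (U, R) \<alpha>' \<beta> (lessB K (?t+1) (?t+3))))"
      using af by (simp del: sat_BigAnd add: sat_BigAnd[of _ _ _ ?t])
    also have "\<dots> \<longleftrightarrow> (a = Inl (f i) \<and> bb = Inl b \<and> a' = Inl (f j) \<and> bb' = Inl b' \<and> (i < j \<or> (i = j \<and> code b < code b')))"
    proof
      assume h: "a \<in> Inl ` A \<and> (a, Inr {f i, b}) \<in> R \<and> bb \<in> Inl ` B \<and> (bb, Inr {f i, b}) \<in> R \<and>
       a' \<in> Inl ` A \<and> (a', Inr {f j, b'}) \<in> R \<and> bb' \<in> Inl ` B \<and> (bb', Inr {f j, b'}) \<in> R \<and>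
       (sat (U, R) \<alpha>' \<beta> (lessA ?t (?t+2)) \<or> (a = a' \<and> sat (U, R) \<alpha>' \<beta> (lessB K (?t+1) (?t+3))))"
      have ea: "a = Inl (f i)" using h i b pickA by blast
      have eb: "bb = Inl b" using h i b pickB by blast
      have ea': "a' = Inl (f j)" using h j b' pickA by blast
      have eb': "bb' = Inl b'" using h j b' pickB by blast
      have lA: "sat (U, R) \<alpha>' \<beta> (lessA ?t (?t+2)) \<longleftrightarrow> i < j"
        by (rule sem_lessA) (use af ea ea' i j in auto)
      have lB: "sat (U, R) \<alpha>' \<beta> (lessB K (?t+1) (?t+3)) \<longleftrightarrow> code b < code b'"
        using sem_lessB[of \<alpha>' "?t+1" b "?t+3" b'] af eb eb' b b' lex_code[of "code b" n "code b'"] code_len by simp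
      show "a = Inl (f i) \<and> bb = Inl b \<and> a' = Inl (f j) \<and> bb' = Inl b' \<and> (i < j \<or> (i = j \<and> code b < code b'))"
        using h ea eb ea' eb' lA lB i j by (auto simp del: sat_BigAnd)
    next
      assume h: "a = Inl (f i) \<and> bb = Inl b \<and> a' = Inl (f j) \<and> bb' = Inl b' \<and> (i < j \<or> (i = j \<and> code b < code b'))"
      have lA: "sat (U, R) \<alpha>' \<beta> (lessA ?t (?t+2)) \<longleftrightarrow> i < j"
        by (rule sem_lessA) (use af h i j in auto)
      have lB: "sat (U, R) \<alpha>' \<beta> (lessB K (?t+1) (?t+3)) \<longleftrightarrow> code b < code b'"
        using sem_lessB[of \<alpha>' "?t+1" b "?t+3" b'] af h b b' lex_code[of "code b" n "code b'"] code_len by simp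
      show "a \<in> Inl ` A \<and> (a, Inr {f i, b}) \<in> R \<and> bb \<in> Inl ` B \<and> (bb, Inr {f i, b}) \<in> R \<and>
       a' \<in> Inl ` A \<and> (a', Inr {f j, b'}) \<in> R \<and> bb' \<in> Inl ` B \<and> (bb', Inr {f j, b'}) \<in> R \<and>
       (sat (U, R) \<alpha>' \<beta> (lessA ?t (?t+2)) \<or> (a = a' \<and> sat (U, R) \<alpha>' \<beta> (lessB K (?t+1) (?t+3))))"
        using h lA lB i j b b' R_Inl_edge[OF i b] R_Inl_edge[OF j b'] fA by (simp del: sat_BigAnd)
    qed
    finally show ?thesis unfolding \<alpha>'_def .
  qed
  show ?thesis unfolding unf body using U_intros i j b b' by blast
qed


definition key :: "'v + 'v set \<Rightarrow> nat \<times> nat \<times> nat list" where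
  "key x = (case x of Inl v \<Rightarrow> if v \<in> A then (0, the_inv_into {..<n} f v, []) else (1, 0, code v)
     | Inr e \<Rightarrow> (2, THE i. i < n \<and> f i \<in> e, code (THE b. b \<in> B \<and> b \<in> e)))"

lemma key_A: "i < n \<Longrightarrow> key (Inl (f i)) = (0, i, [])"
  by (simp add: key_def the_inv_into_f_f[OF f_inj])

lemma key_B: "b \<in> B \<Longrightarrow> key (Inl b) = (1, 0, code b)"
  using A_notB by (auto simp: key_def)

lemma key_E: assumes i: "i < n" and b: "b \<in> B" shows "key (Inr {f i, b}) = (2, i, code b)"
proof -
  have 1: "(THE i'. i' < n \<and> f i' \<in> {f i, b}) = i"
  proof (rule the_equality)
    show "i < n \<and> f i \<in> {f i, b}" using i by simp
    fix i' assume "i' < n \<and> f i' \<in> {f i, b}"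
    then show "i' = i" using i b A_notB fA f_eq by (metis empty_iff insert_iff)
  qed
  have 2: "(THE b'. b' \<in> B \<and> b' \<in> {f i, b}) = b"
  proof (rule the_equality)
    show "b \<in> B \<and> b \<in> {f i, b}" using b by simp
    fix b' assume "b' \<in> B \<and> b' \<in> {f i, b}"
    then show "b' = b" using i A_notB fA by auto
  qed
  show ?thesis using 1 2 by (simp add: key_def)
qed

lemma inj_key: "inj_on key U"
proof
  fix x y assume x: "x \<in> U" and y: "y \<in> U" and k: "key x = key y"
  show "x = y"
    using x
  proof (cases rule: U_cases)
    case (A i) show ?thesis using y
      by (cases rule: U_cases) (use A k in \<open>auto simp: key_A key_B key_E\<close>)
  next
    case (B b) show ?thesis using y
      by (cases rule: U_cases) (use B k in \<open>auto simp: key_A key_B key_E code_eq\<close>)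
  next
    case (E i b) show ?thesis using y
      by (cases rule: U_cases) (use E k in \<open>auto simp: key_A key_B key_E code_eq\<close>)
  qed
qed

lemma fB: "i < n \<Longrightarrow> f i \<notin> B" using A_notB fA by blast

lemma mem_facts:
  "i < n \<Longrightarrow> Inl (f i) \<in> Inl ` A" "i < n \<Longrightarrow> Inl (f i) \<notin> Inl ` B"
  "b \<in> B \<Longrightarrow> Inl b \<notin> Inl ` A" "b \<in> B \<Longrightarrow> Inl b \<in> Inl ` B"
  "Inr e \<notin> Inl ` X"
  using A_notB fA by auto

lemma asg: "asg2 x y 0 = x" "asg2 x y 1 = y" "asg2 x y (Suc 0) = y" by (simp_all add: asg2_def)

lemma phi_unf: "sat (U, R) (asg2 x y) \<beta> (phi K) \<longleftrightarrow> x = y \<or>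
   (x \<in> Inl ` A \<and> y \<in> Inl ` A \<and> sat (U, R) (asg2 x y) \<beta> (lessA 0 1)) \<or>
   (x \<in> Inl ` A \<and> y \<notin> Inl ` A) \<or>
   (x \<in> Inl ` B \<and> y \<in> Inl ` B \<and> sat (U, R) (asg2 x y) \<beta> (lessB K 0 1)) \<or>
   (x \<in> Inl ` B \<and> y \<notin> Inl ` A \<and> y \<notin> Inl ` B) \<or>
   (x \<notin> Inl ` A \<and> x \<notin> Inl ` B \<and> y \<notin> Inl ` A \<and> y \<notin> Inl ` B \<and> sat (U, R) (asg2 x y) \<beta> (lessE K 0 1))"
  by (simp add: phi_def isE_def asg)

lemma sem_phi:
  assumes x: "x \<in> U" and y: "y \<in> U"
  shows "sat (U, R) (asg2 x y) \<beta> (phi K) \<longleftrightarrow> key x \<le> key y"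
  using x
proof (cases rule: U_cases)
  case (A i) note xi = this
  show ?thesis using y
  proof (cases rule: U_cases)
    case (A j)
    have "sat (U, R) (asg2 x y) \<beta> (lessA 0 1) \<longleftrightarrow> i < j"
      by (rule sem_lessA) (use xi A in \<open>auto simp: asg\<close>)
    then show ?thesis using xi A by (auto simp: fB phi_unf mem_facts key_A)
  next
    case (B b) then show ?thesis using xi by (auto simp: fB phi_unf mem_facts key_A key_B)
  next
    case (E j b) then show ?thesis using xi by (auto simp: fB phi_unf mem_facts key_A key_E)
  qed
next
  case (B b) note xb = this
  show ?thesis using y
  proof (cases rule: U_cases)
    case (A j) then show ?thesis using xb by (auto simp: fB phi_unf mem_facts key_A key_B)
  next
    case (B b')
    have "sat (U, R) (asg2 x y) \<beta> (lessB K 0 1) \<longleftrightarrow> code b < code b'"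
      using sem_lessB[of "asg2 x y" 0 b 1 b'] xb B lex_code[of "code b" n "code b'"] code_len by (simp add: asg)
    moreover have "code b = code b' \<longleftrightarrow> b = b'" using xb B code_eq by auto
    ultimately show ?thesis using xb B by (auto simp: fB phi_unf mem_facts key_B list_le_def)
  next
    case (E j b') then show ?thesis using xb by (auto simp: fB phi_unf mem_facts key_B key_E)
  qed
next
  case (E i b) note xe = this
  show ?thesis using y
  proof (cases rule: U_cases)
    case (A j) then show ?thesis using xe by (auto simp: fB phi_unf mem_facts key_A key_E)
  next
    case (B b') then show ?thesis using xe by (auto simp: fB phi_unf mem_facts key_B key_E)
  next
    case (E j b')
    have "sat (U, R) (asg2 x y) \<beta> (lessE K 0 1) \<longleftrightarrow> (i < j \<or> (i = j \<and> code b < code b'))"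
      by (rule sem_lessE) (use xe E in \<open>auto simp: asg\<close>)
    moreover have "code b = code b' \<longleftrightarrow> b = b'" using xe E code_eq by auto
    moreover have "Inr {f i, b} = (Inr {f j, b'} :: 'v + 'v set) \<longleftrightarrow> i = j \<and> b = b'"
      using xe E edge_eq by auto
    ultimately show ?thesis using xe E by (auto simp: fB phi_unf mem_facts key_E list_le_def)
  qed
qed

lemma beta_sub: "\<beta> j \<subseteq> U"
  by (auto simp: \<beta>_def U_def ZM_def ZP_def Q_def)

lemma linear: "linear_order_on U {(a, b). a \<in> U \<and> b \<in> U \<and> sat (U, R) (asg2 a b) \<beta> (phi K)}"
proof -
  let ?r = "{(a, b). a \<in> U \<and> b \<in> U \<and> key a \<le> key b}"
  have eq: "{(a, b). a \<in> U \<and> b \<in> U \<and> sat (U, R) (asg2 a b) \<beta> (phi K)} = ?r"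
    using sem_phi by blast
  have r: "refl_on U ?r" by (rule refl_onI) auto
  have t: "trans ?r" by (rule transI) (auto dest: order_trans)
  have a: "antisym ?r"
  proof (rule antisymI)
    fix x y assume "(x, y) \<in> ?r" "(y, x) \<in> ?r"
    then have "key x = key y" "x \<in> U" "y \<in> U" by auto
    then show "x = y" using inj_key by (auto simp: inj_on_def)
  qed
  have to: "total_on U ?r" by (rule total_onI) (auto simp: le_cases)
  show ?thesis unfolding eq linear_order_on_def partial_order_on_def preorder_on_def
    using r t a to by blast
qed

end

lemma KS_order:
  assumes "KS A B f n mu code K"
  shows "\<exists>P. (\<forall>i<4+K. P i \<subseteq> KS.U A B) \<and> linear_order_on (KS.U A B)
     {(a, b). a \<in> KS.U A B \<and> b \<in> KS.U A B \<and> sat (KS.U A B, KS.R A B) (asg2 a b) P (phi K)}"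
  using KS.linear[OF assms] KS.beta_sub[OF assms] by blast

lemma KS_U: "KS A B f n mu code K \<Longrightarrow> KS.U A B = Inl ` (A \<union> B) \<union> Inr ` {{a, b} | a b. a \<in> A \<and> b \<in> B}"
  by (simp add: KS.U_def KS.E_def)
lemma KS_R: "KS A B f n mu code K \<Longrightarrow> KS.R A B = {(Inl v, Inr e) | v e. v \<in> A \<union> B \<and> e \<in> {{a, b} | a b. a \<in> A \<and> b \<in> B} \<and> v \<in> e}"
  by (simp add: KS.R_def KS.E_def)

lemma good_AB:
  assumes "finite_complete_bipartite G"
    and bound: "\<forall>n m. is_K G n m \<and> n \<le> m \<longrightarrow> m \<le> 2 ^ (s * (n + 1))"
  obtains A B where "A \<inter> B = {}" "A \<union> B = fst G" "finite A" "finite B" "card A \<le> card B"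
     "card B \<le> 2 ^ (s * (card A + 1))" "snd G = {{a, b} | a b. a \<in> A \<and> b \<in> B}"
proof -
  obtain n m where K: "is_K G n m" using assms(1) unfolding finite_complete_bipartite_def by blast
  then obtain A B where AB: "A \<inter> B = {}" "A \<union> B = fst G" "card A = n" "card B = m"
      "snd G = {{a, b} | a b. a \<in> A \<and> b \<in> B}" and finV: "finite (fst G)"
    unfolding is_K_def by blast
  have fin: "finite A" "finite B" using finV AB(2) by (metis finite_Un)+
  show ?thesis
  proof (cases "n \<le> m")
    case True
    have "m \<le> 2 ^ (s * (n + 1))" using bound K True by blast
    then show ?thesis using AB fin True by (intro that[of A B]) simp_all
  next
    case False
    have e: "{{a, b} | a b. a \<in> A \<and> b \<in> B} = {{a, b} | a b. a \<in> B \<and> b \<in> A}"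
      by (auto simp: insert_commute)
    have K2: "is_K G m n"
    proof -
      have "B \<inter> A = {} \<and> B \<union> A = fst G \<and> card B = m \<and> card A = n \<and> snd G = {{a, b} | a b. a \<in> B \<and> b \<in> A}"
        using AB e by auto
      then show ?thesis unfolding is_K_def using finV by blast
    qed
    have "n \<le> 2 ^ (s * (m + 1))" using bound K2 False by simp
    then show ?thesis using AB fin e False
      by (intro that[of B A]) (simp_all add: Int_commute Un_commute)
  qed
qed

lemma if_dir:
  assumes fcb: "\<forall>G\<in>C. finite_complete_bipartite G"
    and bound: "\<forall>G\<in>C. \<forall>n m. is_K G n m \<and> n \<le> m \<longrightarrow> m \<le> 2 ^ (s * (n + 1))"
  shows "MSO2_orderable C"
proof -
  let ?K = "2 ^ s :: nat"
  have "mso_defines_order (phi ?K) (4 + ?K) (incidence_structure ` C)"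
    unfolding mso_defines_order_def
  proof (intro conjI ballI impI)
    show "fv (phi ?K) \<subseteq> {0, 1}" by (rule fv_phi)
    show "fsv (phi ?K) \<subseteq> {..<4 + ?K}" by (rule fsv_phi)
    fix S assume "S \<in> incidence_structure ` C"
    then obtain G where G: "G \<in> C" "S = incidence_structure G" by blast
    have h1: "finite_complete_bipartite G" using fcb G(1) by blast
    have h2: "\<forall>n m. is_K G n m \<and> n \<le> m \<longrightarrow> m \<le> 2 ^ (s * (n + 1))" using bound G(1) by blast
    obtain A B where AB: "A \<inter> B = {}" "A \<union> B = fst G" "finite A" "finite B" "card A \<le> card B"
       "card B \<le> 2 ^ (s * (card A + 1))" "snd G = {{a, b} | a b. a \<in> A \<and> b \<in> B}"
      by (rule good_AB[OF h1 h2])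
    define n where "n = card A"
    obtain f where f: "bij_betw f {0..<n} A" using ex_bij_betw_nat_finite[OF AB(3)] n_def by blast
    obtain mu where mu: "mu ` A \<subseteq> B" "inj_on mu A" using card_le_inj[OF AB(3,4,5)] by blast
    define L where "L = {xs. set xs \<subseteq> {..<?K} \<and> length xs = Suc n}"
    have finL: "finite L" unfolding L_def by (rule finite_lists_length_eq) simp
    have cL: "card L = ?K ^ Suc n" unfolding L_def by (simp add: card_lists_length_eq)
    have "card B \<le> card L" using AB(6) cL n_def by (simp add: power_add power_mult)
    then obtain code where code: "code ` B \<subseteq> L" "inj_on code B" using card_le_inj[OF AB(4) finL] by blast
    have KS: "KS A B f n mu code ?K"
    proof
      show "A \<inter> B = {}" by (rule AB(1))
      show "inj_on f {..<n}" using f by (simp add: bij_betw_def lessThan_atLeast0)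
      show "f ` {..<n} = A" using f by (simp add: bij_betw_def lessThan_atLeast0)
      show "inj_on mu A" "mu ` A \<subseteq> B" using mu by auto
      show "inj_on code B" by (rule code(2))
      show "\<forall>b\<in>B. length (code b) = Suc n" "\<forall>b\<in>B. set (code b) \<subseteq> {..<?K}" using code(1) L_def by auto
    qed
    have S: "S = (KS.U A B, KS.R A B)"
      using G(2) AB(2,7) by (simp add: incidence_structure_def KS_U[OF KS] KS_R[OF KS])
    show "\<exists>P. (\<forall>i<4 + ?K. P i \<subseteq> fst S) \<and>
           linear_order_on (fst S) {(a, b). a \<in> fst S \<and> b \<in> fst S \<and> sat S (asg2 a b) P (phi ?K)}"
      using KS_order[OF KS] S by simp
  qed
  then show ?thesis unfolding MSO2_orderable_def by blast
qed

theorem lemma4p26: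
  fixes C :: "('v set \<times> 'v set set) set"
  assumes "\<forall>G\<in>C. finite_complete_bipartite G"
  shows "MSO2_orderable C \<longleftrightarrow>
           (\<exists>s::nat. \<forall>G\<in>C. \<forall>n m. is_K G n m \<and> n \<le> m \<longrightarrow> m \<le> 2 ^ (s * (n + 1)))"
proof
  assume "MSO2_orderable C"
  then obtain \<phi> k where o: "mso_defines_order \<phi> k (incidence_structure ` C)"
    unfolding MSO2_orderable_def by blast
  show "\<exists>s::nat. \<forall>G\<in>C. \<forall>n m. is_K G n m \<and> n \<le> m \<longrightarrow> m \<le> 2 ^ (s * (n + 1))"
    using only_if[OF o] by blast
next
  assume "\<exists>s::nat. \<forall>G\<in>C. \<forall>n m. is_K G n m \<and> n \<le> m \<longrightarrow> m \<le> 2 ^ (s * (n + 1))"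
  then obtain s where "\<forall>G\<in>C. \<forall>n m. is_K G n m \<and> n \<le> m \<longrightarrow> m \<le> 2 ^ (s * (n + 1))" by blast
  then show "MSO2_orderable C" using if_dir assms by blast
qed

end
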